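(* Let $H=(V_H,E_H)$ be a directed graph, let $k,\ell\in V_H$ with $k\ne\ell$, and let $j$ be a positive integer. Assume $H$ has no edges outgoing from $\ell$, and let $K$ be the graph obtained from $H$ by removing all edges outgoing from $k$. Then $$\mathcal F_j^{k,\ell}(H)=\bigcup_{i:\,(k\to i)\in E_H}\left\{(V_H,\,E_F\cup\{k\to i\})\ :\ F\in\mathcal F_{j-1}^{i,\ell}(K)\right\}.$$
   Context: Graphs are finite directed (multi)graphs. A spanning incoming forest of a graph is a spanning subgraph (containing all vertices) whose underlying undirected graph has no cycles and in which each node has at most one outgoing edge. $\mathcal F_j^{a,b}(H)$ denotes the set of spanning incoming forests of $H$ with exactly $j$ edges such that some connected component (of the underlying undirected graph) contains both $a$ and $b$ (when $a=b$ this is all $j$-edge spanning incoming forests). $E_F$ denotes the edge set of $F$. *)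

theory Defs
  imports Main
begin

text \<open>Directed multigraphs: edges are abstract identifiers of type 'e; the global functions
  src, tgt :: 'e => 'v give tail and head. A graph is a pair (V, E) of a vertex set and an
  edge set.\<close>

definition wf_digraph :: "('e \<Rightarrow> 'v) \<Rightarrow> ('e \<Rightarrow> 'v) \<Rightarrow> 'v set \<times> 'e set \<Rightarrow> bool" where
  "wf_digraph src tgt G \<longleftrightarrow> finite (fst G) \<and> finite (snd G) \<and>
     (\<forall>e\<in>snd G. src e \<in> fst G \<and> tgt e \<in> fst G)"

definition joins :: "('e \<Rightarrow> 'v) \<Rightarrow> ('e \<Rightarrow> 'v) \<Rightarrow> 'e \<Rightarrow> 'v \<Rightarrow> 'v \<Rightarrow> bool" where
  "joins src tgt e u w \<longleftrightarrow> (src e = u \<and> tgt e = w) \<or> (src e = w \<and> tgt e = u)"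

text \<open>Undirected cycle in edge set E: distinct edges es, closed vertex sequence vs whose
  interior vertices are distinct (loops and pairs of parallel edges count as cycles).\<close>
definition undirected_cycle :: "('e \<Rightarrow> 'v) \<Rightarrow> ('e \<Rightarrow> 'v) \<Rightarrow> 'e set \<Rightarrow> 'e list \<Rightarrow> 'v list \<Rightarrow> bool" where
  "undirected_cycle src tgt E es vs \<longleftrightarrow>
     es \<noteq> [] \<and> length vs = Suc (length es) \<and> set es \<subseteq> E \<and> distinct es \<and>
     hd vs = last vs \<and> distinct (tl vs) \<and>
     (\<forall>i < length es. joins src tgt (es ! i) (vs ! i) (vs ! Suc i))"

definition has_undirected_cycle :: "('e \<Rightarrow> 'v) \<Rightarrow> ('e \<Rightarrow> 'v) \<Rightarrow> 'e set \<Rightarrow> bool" where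
  "has_undirected_cycle src tgt E \<longleftrightarrow> (\<exists>es vs. undirected_cycle src tgt E es vs)"

definition spanning_incoming_forest ::
  "('e \<Rightarrow> 'v) \<Rightarrow> ('e \<Rightarrow> 'v) \<Rightarrow> 'v set \<times> 'e set \<Rightarrow> 'v set \<times> 'e set \<Rightarrow> bool" where
  "spanning_incoming_forest src tgt G F \<longleftrightarrow>
     fst F = fst G \<and> snd F \<subseteq> snd G \<and>
     \<not> has_undirected_cycle src tgt (snd F) \<and>
     (\<forall>v\<in>fst F. card {e\<in>snd F. src e = v} \<le> 1)"

definition same_component :: "('e \<Rightarrow> 'v) \<Rightarrow> ('e \<Rightarrow> 'v) \<Rightarrow> 'v set \<times> 'e set \<Rightarrow> 'v \<Rightarrow> 'v \<Rightarrow> bool" where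
  "same_component src tgt F a b \<longleftrightarrow>
     a \<in> fst F \<and> b \<in> fst F \<and> (\<lambda>u w. \<exists>e\<in>snd F. joins src tgt e u w)\<^sup>*\<^sup>* a b"

definition forests_jab ::
  "('e \<Rightarrow> 'v) \<Rightarrow> ('e \<Rightarrow> 'v) \<Rightarrow> nat \<Rightarrow> 'v \<Rightarrow> 'v \<Rightarrow> 'v set \<times> 'e set \<Rightarrow> ('v set \<times> 'e set) set" where
  "forests_jab src tgt j a b H =
     {F. spanning_incoming_forest src tgt H F \<and> card (snd F) = j \<and> same_component src tgt F a b}"

end

theory Submission
  imports Defs
begin

abbreviation UR :: "('e \<Rightarrow> 'v) \<Rightarrow> ('e \<Rightarrow> 'v) \<Rightarrow> 'e set \<Rightarrow> 'v \<Rightarrow> 'v \<Rightarrow> bool" where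
  "UR src tgt E \<equiv> (\<lambda>u w. \<exists>e\<in>E. joins src tgt e u w)"

abbreviation DR :: "('e \<Rightarrow> 'v) \<Rightarrow> ('e \<Rightarrow> 'v) \<Rightarrow> 'e set \<Rightarrow> 'v \<Rightarrow> 'v \<Rightarrow> bool" where
  "DR src tgt E \<equiv> (\<lambda>x y. \<exists>e\<in>E. src e = x \<and> tgt e = y)"

lemma UR_sym:
  assumes "(UR src tgt E)\<^sup>*\<^sup>* a b" shows "(UR src tgt E)\<^sup>*\<^sup>* b a"
  using assms
proof (induction rule: rtranclp_induct)
  case base then show ?case by simp
next
  case (step y z)
  then obtain e where "e \<in> E" "joins src tgt e y z" by blast
  then have "UR src tgt E z y" unfolding joins_def by blast
  then show ?case using step(3) by (rule converse_rtranclp_into_rtranclp)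
qed

lemma UR_mono:
  assumes "(UR src tgt E)\<^sup>*\<^sup>* a b" "E \<subseteq> E'" shows "(UR src tgt E')\<^sup>*\<^sup>* a b"
  using assms(1)
proof (induction rule: rtranclp_induct)
  case base then show ?case by simp
next
  case (step y z)
  then have "UR src tgt E' y z" using assms(2) by blast
  then show ?case by (rule rtranclp.rtrancl_into_rtrancl[OF step.IH])
qed

lemma DR_UR:
  assumes "(DR src tgt E)\<^sup>*\<^sup>* a b" shows "(UR src tgt E)\<^sup>*\<^sup>* a b"
  using assms
proof (induction rule: rtranclp_induct)
  case base then show ?case by simp
next
  case (step y z)
  then have "UR src tgt E y z" unfolding joins_def by blast
  then show ?case by (rule rtranclp.rtrancl_into_rtrancl[OF step.IH])
qed

lemma lemA:
  assumes "(UR src tgt E)\<^sup>*\<^sup>* u w" "\<forall>e\<in>E. src e \<noteq> u"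
    "\<forall>e1\<in>E. \<forall>e2\<in>E. src e1 = src e2 \<longrightarrow> e1 = e2"
  shows "(DR src tgt E)\<^sup>*\<^sup>* w u"
  using assms(1)
proof (induction rule: rtranclp_induct)
  case base then show ?case by simp
next
  case (step x w)
  then obtain f where f: "f \<in> E" "joins src tgt f x w" by blast
  show ?case
  proof (cases "src f = x \<and> tgt f = w")
    case True
    from step(3) show ?thesis
    proof (cases rule: converse_rtranclpE)
      case base then show ?thesis using True f assms(2) by blast
    next
      case (step z)
      then obtain g where "g \<in> E" "src g = x" "tgt g = z" by blast
      then have "g = f" using True f assms(3) by metis
      then show ?thesis using step True \<open>tgt g = z\<close> by simp
    qed
  next
    case False
    then have "src f = w \<and> tgt f = x" using f unfolding joins_def by blast
    then have "DR src tgt E w x" using f by blast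
    then show ?thesis using step(3) by (rule converse_rtranclp_into_rtranclp)
  qed
qed

lemma walk:
  assumes "length vs = Suc (length es)"
    "\<forall>i<length es. joins src tgt (es!i) (vs!i) (vs!Suc i)"
    "b \<le> length es" "a \<le> b" "\<forall>m. a \<le> m \<and> m < b \<longrightarrow> es!m \<in> E"
  shows "(UR src tgt E)\<^sup>*\<^sup>* (vs!a) (vs!b)"
  using assms(3-5)
proof (induction b)
  case 0 then show ?case by simp
next
  case (Suc b)
  show ?case
  proof (cases "a = Suc b")
    case True then show ?thesis by simp
  next
    case False
    then have ab: "a \<le> b" using Suc by simp
    then have IH: "(UR src tgt E)\<^sup>*\<^sup>* (vs!a) (vs!b)" using Suc by simp
    have "es!b \<in> E" using Suc ab by simp
    moreover have "joins src tgt (es!b) (vs!b) (vs!Suc b)" using assms(2) Suc by simp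
    ultimately have "UR src tgt E (vs!b) (vs!Suc b)" by blast
    then show ?thesis using IH by (rule rtranclp.rtrancl_into_rtrancl[rotated])
  qed
qed

lemma lemB:
  assumes "undirected_cycle src tgt (insert e E) es vs" "\<not> has_undirected_cycle src tgt E"
  shows "(UR src tgt E)\<^sup>*\<^sup>* (tgt e) (src e)"
proof -
  have ne: "es \<noteq> []" and len: "length vs = Suc (length es)" and sub: "set es \<subseteq> insert e E"
    and d: "distinct es" and hl: "hd vs = last vs"
    and jn: "\<forall>i < length es. joins src tgt (es ! i) (vs ! i) (vs ! Suc i)"
    using assms(1) unfolding undirected_cycle_def by blast+
  have "e \<in> set es"
  proof (rule ccontr)
    assume "e \<notin> set es"
    then have "set es \<subseteq> E" using sub by blast
    then have "undirected_cycle src tgt E es vs" using assms(1) unfolding undirected_cycle_def by blast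
    then show False using assms(2) unfolding has_undirected_cycle_def by blast
  qed
  then obtain i where i: "i < length es" "es!i = e" by (metis in_set_conv_nth)
  have other: "es!m \<in> E" if "m < length es" "m \<noteq> i" for m
  proof -
    have "es!m \<in> insert e E" using sub that(1) nth_mem by blast
    moreover have "es!m \<noteq> e" using nth_eq_iff_index_eq[OF d that(1) i(1)] that(2) i(2) by simp
    ultimately show ?thesis by blast
  qed
  have w1: "(UR src tgt E)\<^sup>*\<^sup>* (vs!Suc i) (vs!length es)"
    by (rule walk[OF len jn, of "length es" "Suc i" E]) (use i other in force)+
  have w2: "(UR src tgt E)\<^sup>*\<^sup>* (vs!0) (vs!i)"
    by (rule walk[OF len jn, of i 0 E]) (use i other in force)+
  have "vs \<noteq> []" using len by auto
  then have "vs!0 = vs!length es" using hl len by (simp add: hd_conv_nth last_conv_nth)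
  then have r: "(UR src tgt E)\<^sup>*\<^sup>* (vs!Suc i) (vs!i)" using w1 w2 by simp
  have "joins src tgt e (vs!i) (vs!Suc i)" using jn i by auto
  then have "(src e = vs!i \<and> tgt e = vs!Suc i) \<or> (src e = vs!Suc i \<and> tgt e = vs!i)"
    unfolding joins_def .
  then show ?thesis using r UR_sym[OF r] by auto
qed

lemma path_simple:
  assumes "(DR src tgt E)\<^sup>*\<^sup>* a b"
  shows "\<exists>es vs. length vs = Suc (length es) \<and> hd vs = a \<and> last vs = b \<and> distinct vs \<and>
    set es \<subseteq> E \<and> (\<forall>i<length es. src (es!i) = vs!i \<and> tgt (es!i) = vs!Suc i)"
  using assms
proof (induction rule: converse_rtranclp_induct)
  case base
  show ?case by (rule exI[of _ "[]"], rule exI[of _ "[b]"]) simp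
next
  case (step x y)
  then obtain g where g: "g \<in> E" "src g = x" "tgt g = y" by blast
  from step(3) obtain es vs where p: "length vs = Suc (length es)" "hd vs = y" "last vs = b"
    "distinct vs" "set es \<subseteq> E" "\<forall>i<length es. src (es!i) = vs!i \<and> tgt (es!i) = vs!Suc i"
    by blast
  have vne: "vs \<noteq> []" using p by auto
  show ?case
  proof (cases "x \<in> set vs")
    case True
    then obtain m where m: "m < length vs" "vs!m = x" by (metis in_set_conv_nth)
    show ?thesis
    proof (rule exI[of _ "drop m es"], rule exI[of _ "drop m vs"], intro conjI)
      show "length (drop m vs) = Suc (length (drop m es))" using p m by simp
      show "hd (drop m vs) = x" using m by (simp add: hd_drop_conv_nth)
      show "last (drop m vs) = b" using m p by simp
      show "distinct (drop m vs)" using p by simp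
      show "set (drop m es) \<subseteq> E" using p(5) by (meson order_trans set_drop_subset)
      show "\<forall>i<length (drop m es). src (drop m es ! i) = drop m vs ! i \<and> tgt (drop m es ! i) = drop m vs ! Suc i"
      proof (intro allI impI)
        fix i assume "i < length (drop m es)"
        then have mi: "m + i < length es" by simp
        then have "src (es!(m+i)) = vs!(m+i) \<and> tgt (es!(m+i)) = vs!Suc(m+i)" using p(6) by blast
        then show "src (drop m es ! i) = drop m vs ! i \<and> tgt (drop m es ! i) = drop m vs ! Suc i"
          using mi m p(1) by simp
      qed
    qed
  next
    case False
    show ?thesis
    proof (rule exI[of _ "g # es"], rule exI[of _ "x # vs"], intro conjI)
      show "length (x # vs) = Suc (length (g # es))" using p by simp
      show "hd (x # vs) = x" by simp
      show "last (x # vs) = b" using p vne by simp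
      show "distinct (x # vs)" using p False by simp
      show "set (g # es) \<subseteq> E" using p g by simp
      show "\<forall>i<length (g # es). src ((g # es) ! i) = (x # vs) ! i \<and> tgt ((g # es) ! i) = (x # vs) ! Suc i"
      proof (intro allI impI)
        fix i assume "i < length (g # es)"
        then show "src ((g # es) ! i) = (x # vs) ! i \<and> tgt ((g # es) ! i) = (x # vs) ! Suc i"
          using p g vne by (cases i) (auto simp: hd_conv_nth)
      qed
    qed
  qed
qed

lemma DR_split:
  assumes "(DR src tgt E)\<^sup>*\<^sup>* x l" "src e = k"
  shows "(DR src tgt (E - {e}))\<^sup>*\<^sup>* x l \<or> (DR src tgt (E - {e}))\<^sup>*\<^sup>* x k"
  using assms(1)
proof (induction rule: converse_rtranclp_induct)
  case base then show ?case by simp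
next
  case (step x y)
  then obtain g where g: "g \<in> E" "src g = x" "tgt g = y" by blast
  show ?case
  proof (cases "g = e")
    case True then show ?thesis using g assms(2) by simp
  next
    case False
    then have "DR src tgt (E - {e}) x y" using g by blast
    then show ?thesis using step.IH
      by (elim disjE) (blast intro: converse_rtranclp_into_rtranclp)+
  qed
qed

lemma uniq_out:
  assumes "spanning_incoming_forest src tgt (VH, EH) (VH, E)" "wf_digraph src tgt (VH, EH)"
  shows "\<forall>e1\<in>E. \<forall>e2\<in>E. src e1 = src e2 \<longrightarrow> e1 = e2"
proof (intro ballI impI)
  fix e1 e2 assume e: "e1 \<in> E" "e2 \<in> E" "src e1 = src e2"
  have sub: "E \<subseteq> EH" using assms(1) unfolding spanning_incoming_forest_def by simp
  have fin: "finite E" using assms(2) sub unfolding wf_digraph_def by (auto intro: finite_subset)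
  have "e1 \<in> EH" using sub e by blast
  then have "src e1 \<in> VH" using assms(2) unfolding wf_digraph_def by simp
  then have "card {e\<in>E. src e = src e1} \<le> Suc 0" using assms(1) unfolding spanning_incoming_forest_def by simp
  moreover have "finite {e\<in>E. src e = src e1}" using fin by simp
  ultimately have "\<forall>a\<in>{e\<in>E. src e = src e1}. \<forall>b\<in>{e\<in>E. src e = src e1}. a = b"
    using card_le_Suc0_iff_eq by blast
  moreover have "e1 \<in> {e\<in>E. src e = src e1}" "e2 \<in> {e\<in>E. src e = src e1}" using e by simp_all
  ultimately show "e1 = e2" by blast
qed

theorem lemma2p6:
  fixes src tgt :: "'e \<Rightarrow> 'v" and VH :: "'v set" and EH :: "'e set"
    and k l :: 'v and j :: nat
  assumes "wf_digraph src tgt (VH, EH)"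
    and "k \<in> VH" and "l \<in> VH" and "k \<noteq> l" and "j \<ge> 1"
    and "\<forall>e\<in>EH. src e \<noteq> l"
  shows "forests_jab src tgt j k l (VH, EH) =
    (\<Union>e\<in>{e\<in>EH. src e = k}.
       {(VH, snd F \<union> {e}) | F. F \<in> forests_jab src tgt (j - 1) (tgt e) l (VH, {e'\<in>EH. src e' \<noteq> k})})"
proof (rule set_eqI, rule iffI)
  let ?K = "{e'\<in>EH. src e' \<noteq> k}"
  fix F
  assume "F \<in> forests_jab src tgt j k l (VH, EH)"
  then have sf: "spanning_incoming_forest src tgt (VH, EH) F" and cF: "card (snd F) = j"
    and sc: "same_component src tgt F k l"
    unfolding forests_jab_def by auto
  define EF where "EF = snd F"
  have Fd: "F = (VH, EF)" using sf unfolding EF_def spanning_incoming_forest_def by (cases F) auto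
  have sf': "spanning_incoming_forest src tgt (VH, EH) (VH, EF)" using sf Fd by simp
  have uniq: "\<forall>e1\<in>EF. \<forall>e2\<in>EF. src e1 = src e2 \<longrightarrow> e1 = e2" by (rule uniq_out[OF sf' assms(1)])
  have sub: "EF \<subseteq> EH" using sf' unfolding spanning_incoming_forest_def by simp
  have fin: "finite EF" using assms(1) sub unfolding wf_digraph_def by (auto intro: finite_subset)
  have acyc: "\<not> has_undirected_cycle src tgt EF" using sf' unfolding spanning_incoming_forest_def by simp
  have "(UR src tgt EF)\<^sup>*\<^sup>* k l" using sc Fd unfolding same_component_def EF_def by simp
  then have "(UR src tgt EF)\<^sup>*\<^sup>* l k" by (rule UR_sym)
  moreover have "\<forall>e\<in>EF. src e \<noteq> l" using sub assms(6) by blast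
  ultimately have "(DR src tgt EF)\<^sup>*\<^sup>* k l" using uniq by (rule lemA)
  then obtain e where e: "e \<in> EF" "src e = k" and ry: "(DR src tgt EF)\<^sup>*\<^sup>* (tgt e) l"
  proof (cases rule: converse_rtranclpE)
    case base then show ?thesis using assms(4) by simp
  next
    case (step y)
    then show ?thesis using that by blast
  qed
  have "(DR src tgt (EF - {e}))\<^sup>*\<^sup>* (tgt e) l"
  proof -
    have "\<not> (DR src tgt (EF - {e}))\<^sup>*\<^sup>* (tgt e) k"
    proof
      assume "(DR src tgt (EF - {e}))\<^sup>*\<^sup>* (tgt e) k"
      then obtain es vs where p: "length vs = Suc (length es)" "hd vs = tgt e" "last vs = k"
        "distinct vs" "set es \<subseteq> EF - {e}" "\<forall>i<length es. src (es!i) = vs!i \<and> tgt (es!i) = vs!Suc i"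
        using path_simple[where E="EF - {e}" and a="tgt e" and b=k] by blast
      have vne: "vs \<noteq> []" using p by auto
      have des: "distinct es"
        unfolding distinct_conv_nth
      proof (intro allI impI)
        fix a b assume ab: "a < length es" "b < length es" "a \<noteq> b"
        then have "vs!a \<noteq> vs!b" using p by (simp add: nth_eq_iff_index_eq)
        then show "es!a \<noteq> es!b" using p ab by metis
      qed
      have "undirected_cycle src tgt EF (e # es) (k # vs)"
        unfolding undirected_cycle_def
      proof (intro conjI)
        show "set (e # es) \<subseteq> EF" using p e by auto
        show "distinct (e # es)" using p des by auto
        show "hd (k # vs) = last (k # vs)" using p vne by simp
        show "\<forall>i<length (e # es). joins src tgt ((e # es) ! i) ((k # vs) ! i) ((k # vs) ! Suc i)"
        proof (intro allI impI)
          fix i assume "i < length (e # es)"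
          then show "joins src tgt ((e # es) ! i) ((k # vs) ! i) ((k # vs) ! Suc i)"
            using p e vne by (cases i) (auto simp: hd_conv_nth joins_def)
        qed
      qed (use p in auto)
      then show False using acyc unfolding has_undirected_cycle_def by blast
    qed
    then show ?thesis using DR_split[OF ry e(2)] by blast
  qed
  then have ur: "(UR src tgt (EF - {e}))\<^sup>*\<^sup>* (tgt e) l" by (rule DR_UR)
  have eH: "e \<in> EH" using e sub by blast
  have "(VH, EF - {e}) \<in> forests_jab src tgt (j - 1) (tgt e) l (VH, ?K)"
    unfolding forests_jab_def
  proof (intro CollectI conjI)
    show "spanning_incoming_forest src tgt (VH, ?K) (VH, EF - {e})"
      unfolding spanning_incoming_forest_def
    proof (intro conjI)
      show "snd (VH, EF - {e}) \<subseteq> snd (VH, ?K)" using sub uniq e by auto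
      show "\<not> has_undirected_cycle src tgt (snd (VH, EF - {e}))"
        using acyc unfolding has_undirected_cycle_def undirected_cycle_def by auto
      show "\<forall>v\<in>fst (VH, EF - {e}). card {ea \<in> snd (VH, EF - {e}). src ea = v} \<le> 1"
      proof
        fix v assume "v \<in> fst (VH, EF - {e})"
        then have "card {ea \<in> EF. src ea = v} \<le> 1" using sf' unfolding spanning_incoming_forest_def by simp
        moreover have "card {ea \<in> EF - {e}. src ea = v} \<le> card {ea \<in> EF. src ea = v}"
          using fin by (intro card_mono) auto
        ultimately show "card {ea \<in> snd (VH, EF - {e}). src ea = v} \<le> 1" by simp
      qed
    qed simp
    show "card (snd (VH, EF - {e})) = j - 1" using cF Fd e fin by simp
    show "same_component src tgt (VH, EF - {e}) (tgt e) l"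
      unfolding same_component_def using ur assms(1,3) eH unfolding wf_digraph_def by auto
  qed
  moreover have "F = (VH, snd (VH, EF - {e}) \<union> {e})" using Fd e by auto
  ultimately show "F \<in> (\<Union>e\<in>{e\<in>EH. src e = k}.
       {(VH, snd F \<union> {e}) | F. F \<in> forests_jab src tgt (j - 1) (tgt e) l (VH, ?K)})"
    using eH e by blast
next
  let ?K = "{e'\<in>EH. src e' \<noteq> k}"
  fix F
  assume "F \<in> (\<Union>e\<in>{e\<in>EH. src e = k}.
       {(VH, snd F \<union> {e}) | F. F \<in> forests_jab src tgt (j - 1) (tgt e) l (VH, ?K)})"
  then obtain e F' where e: "e \<in> EH" "src e = k" and Fd: "F = (VH, snd F' \<union> {e})"
    and F': "F' \<in> forests_jab src tgt (j - 1) (tgt e) l (VH, ?K)" by blast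
  define E' where "E' = snd F'"
  have sf: "spanning_incoming_forest src tgt (VH, ?K) F'" and cF: "card E' = j - 1"
    and sc: "same_component src tgt F' (tgt e) l"
    using F' unfolding forests_jab_def E'_def by auto
  have F'd: "F' = (VH, E')" using sf unfolding E'_def spanning_incoming_forest_def by (cases F') auto
  have sf': "spanning_incoming_forest src tgt (VH, ?K) (VH, E')" using sf F'd by simp
  have wfK: "wf_digraph src tgt (VH, ?K)" using assms(1) unfolding wf_digraph_def by auto
  have uniq: "\<forall>e1\<in>E'. \<forall>e2\<in>E'. src e1 = src e2 \<longrightarrow> e1 = e2" by (rule uniq_out[OF sf' wfK])
  have sub: "E' \<subseteq> ?K" using sf' unfolding spanning_incoming_forest_def by simp
  have fin: "finite E'" using assms(1) sub unfolding wf_digraph_def by (auto intro: finite_subset)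
  have acyc: "\<not> has_undirected_cycle src tgt E'" using sf' unfolding spanning_incoming_forest_def by simp
  have enot: "e \<notin> E'" using sub e by auto
  have url: "(UR src tgt E')\<^sup>*\<^sup>* (tgt e) l" using sc F'd unfolding same_component_def by simp
  have "\<not> has_undirected_cycle src tgt (insert e E')"
  proof
    assume "has_undirected_cycle src tgt (insert e E')"
    then obtain es vs where "undirected_cycle src tgt (insert e E') es vs"
      unfolding has_undirected_cycle_def by blast
    then have "(UR src tgt E')\<^sup>*\<^sup>* (tgt e) (src e)" using acyc by (rule lemB)
    then have "(UR src tgt E')\<^sup>*\<^sup>* (tgt e) k" using e(2) by simp
    then have "(UR src tgt E')\<^sup>*\<^sup>* k (tgt e)" by (rule UR_sym)
    then have "(UR src tgt E')\<^sup>*\<^sup>* k l" using url by simp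
    then have "(UR src tgt E')\<^sup>*\<^sup>* l k" by (rule UR_sym)
    moreover have "\<forall>e\<in>E'. src e \<noteq> l" using sub assms(6) by blast
    ultimately have "(DR src tgt E')\<^sup>*\<^sup>* k l" using uniq by (rule lemA)
    then show False
    proof (cases rule: converse_rtranclpE)
      case base then show ?thesis using assms(4) by simp
    next
      case (step y)
      then show ?thesis using sub by blast
    qed
  qed
  have "(VH, E' \<union> {e}) \<in> forests_jab src tgt j k l (VH, EH)"
    unfolding forests_jab_def
  proof (intro CollectI conjI)
    show "spanning_incoming_forest src tgt (VH, EH) (VH, E' \<union> {e})"
      unfolding spanning_incoming_forest_def
    proof (intro conjI)
      show "snd (VH, E' \<union> {e}) \<subseteq> snd (VH, EH)" using sub e by auto
      show "\<not> has_undirected_cycle src tgt (snd (VH, E' \<union> {e}))"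
        using \<open>\<not> has_undirected_cycle src tgt (insert e E')\<close> by simp
      show "\<forall>v\<in>fst (VH, E' \<union> {e}). card {ea \<in> snd (VH, E' \<union> {e}). src ea = v} \<le> 1"
      proof
        fix v assume v: "v \<in> fst (VH, E' \<union> {e})"
        show "card {ea \<in> snd (VH, E' \<union> {e}). src ea = v} \<le> 1"
        proof (cases "v = k")
          case True
          then have "{ea \<in> snd (VH, E' \<union> {e}). src ea = v} = {e}" using sub e by auto
          then show ?thesis by simp
        next
          case False
          then have "{ea \<in> snd (VH, E' \<union> {e}). src ea = v} = {ea \<in> E'. src ea = v}" using e by auto
          then show ?thesis using v sf' unfolding spanning_incoming_forest_def by simp
        qed
      qed
    qed simp
    show "card (snd (VH, E' \<union> {e})) = j" using cF fin enot assms(5) by simp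
    have "UR src tgt (E' \<union> {e}) k (tgt e)" using e unfolding joins_def by blast
    moreover have "(UR src tgt (E' \<union> {e}))\<^sup>*\<^sup>* (tgt e) l" using url by (rule UR_mono) blast
    ultimately have "(UR src tgt (E' \<union> {e}))\<^sup>*\<^sup>* k l" by (rule converse_rtranclp_into_rtranclp)
    then show "same_component src tgt (VH, E' \<union> {e}) k l"
      unfolding same_component_def using assms(2,3) by simp
  qed
  then show "F \<in> forests_jab src tgt j k l (VH, EH)" using Fd F'd by simp
qed

end
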